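(* Let $n<m$ and consider the uniform-threshold game $G_t=\langle n,m,p,t\rangle$. (i) If $\frac{1}{\lceil 2m/n\rceil-1}<p\le\frac{1}{\lceil m/n\rceil}$ and $t>p-\frac{p(\lfloor 1/p\rfloor+1)-1}{\lceil 2m/n\rceil-\lfloor 1/p\rfloor}$, let $s^*$ be a pure equilibrium with $w_j(s^* )=p$ for all $j$. (ii) If $p>\frac{1}{\lceil m/n\rceil}$ and there is $\epsilon>0$ with $t\ge(1-\frac nm)\frac nm+\epsilon$ when $m\bmod n=0$, and $t\ge \frac{1}{\lceil m/n\rceil}$ otherwise, let $s^*$ be a pure equilibrium with $w_j(s^* )=\frac{1}{\lceil m/n\rceil}$ for all $j$. In both cases $s^*$ maximizes the users' social welfare, i.e. $SW(s^* )\ge SW(s)$ for every strategy profile $s$, where $SW(s)=-\max_{1\le j\le m}|p-w_j(s)|$, and it maximizes publishers' exposure: every query is won by some player.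
   Context: Setting: integers $n,m$ with $n<m$ ($n$ players, queries $q_1,\dots,q_m$), a peak value $p\in(0,1]$ and a score function $f:[0,1]\to[0,1]$ single-peaked at $p$ ($p$ is the unique point such that $f$ is non-decreasing on $[0,p]$ and non-increasing on $[p,1]$). Each player $i$ chooses $d_i\in D=\{d\in[0,1]^m:\sum_j d^j\le1\}$, with score $f(d_i^j)$ for $q_j$; $s=(d_1,\dots,d_n)$ is a strategy profile. In the game $G_t=\langle n,m,p,t\rangle$ (uniform threshold $t$ for every query), player $i$'s document is eligible for $q_j$ iff $d_i^j\ge t$; among eligible documents those of highest score are the winners of $q_j$; if $q_j$ has $h_j(s)$ winners each receives $1/h_j(s)$, and a query with no eligible document is won by no player. $w_j(s)$ denotes the value $d_i^j$ of a winner of $q_j$ ($0$ if there is none). A pure equilibrium is a pure Nash equilibrium (no player can strictly increase her utility by a unilateral change of document) in which every query has at least one winner. Such equilibria $s^*$ exist under the hypotheses of (i) and (ii). *)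

theory Defs
  imports Complex_Main
begin

text \<open>Players are indexed by i < n, queries by j < m. A document is a function
  d :: nat \<Rightarrow> real (only the entries j < m matter); a strategy profile is
  s :: nat \<Rightarrow> nat \<Rightarrow> real with s i = d_i, i.e. s i j = d_i^j.\<close>

definition doc_space :: "nat \<Rightarrow> (nat \<Rightarrow> real) set" where
  "doc_space m = {d. (\<forall>j<m. 0 \<le> d j \<and> d j \<le> 1) \<and> (\<Sum>j<m. d j) \<le> 1}"

definition profile :: "nat \<Rightarrow> nat \<Rightarrow> (nat \<Rightarrow> nat \<Rightarrow> real) \<Rightarrow> bool" where
  "profile n m s \<longleftrightarrow> (\<forall>i<n. s i \<in> doc_space m)"

definition peak_at :: "(real \<Rightarrow> real) \<Rightarrow> real \<Rightarrow> bool" where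
  "peak_at f q \<longleftrightarrow> q \<in> {0..1} \<and> monotone_on {0..q} (\<le>) (\<le>) f \<and> monotone_on {q..1} (\<le>) (\<ge>) f"

definition single_peaked :: "(real \<Rightarrow> real) \<Rightarrow> real \<Rightarrow> bool" where
  "single_peaked f p \<longleftrightarrow> (\<forall>x\<in>{0..1}. f x \<in> {0..1}) \<and> peak_at f p \<and>
     (\<forall>q. peak_at f q \<longrightarrow> q = p)"

definition winners :: "nat \<Rightarrow> (real \<Rightarrow> real) \<Rightarrow> real \<Rightarrow> (nat \<Rightarrow> nat \<Rightarrow> real) \<Rightarrow> nat \<Rightarrow> nat set" where
  "winners n f t s j = {i. i < n \<and> t \<le> s i j \<and>
      (\<forall>k<n. t \<le> s k j \<longrightarrow> f (s k j) \<le> f (s i j))}"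

definition utility :: "nat \<Rightarrow> nat \<Rightarrow> (real \<Rightarrow> real) \<Rightarrow> real \<Rightarrow> (nat \<Rightarrow> nat \<Rightarrow> real) \<Rightarrow> nat \<Rightarrow> real" where
  "utility n m f t s i = (\<Sum>j<m. if i \<in> winners n f t s j
        then 1 / real (card (winners n f t s j)) else 0)"

definition pure_NE :: "nat \<Rightarrow> nat \<Rightarrow> (real \<Rightarrow> real) \<Rightarrow> real \<Rightarrow> (nat \<Rightarrow> nat \<Rightarrow> real) \<Rightarrow> bool" where
  "pure_NE n m f t s \<longleftrightarrow> profile n m s \<and>
     (\<forall>i<n. \<forall>d\<in>doc_space m. utility n m f t (s(i := d)) i \<le> utility n m f t s i)"

definition pure_equilibrium :: "nat \<Rightarrow> nat \<Rightarrow> (real \<Rightarrow> real) \<Rightarrow> real \<Rightarrow> (nat \<Rightarrow> nat \<Rightarrow> real) \<Rightarrow> bool" where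
  "pure_equilibrium n m f t s \<longleftrightarrow> pure_NE n m f t s \<and> (\<forall>j<m. winners n f t s j \<noteq> {})"

text \<open>w_j(s): the value d_i^j of a (chosen) winner i of q_j, 0 if there is none.\<close>
definition win_val :: "nat \<Rightarrow> (real \<Rightarrow> real) \<Rightarrow> real \<Rightarrow> (nat \<Rightarrow> nat \<Rightarrow> real) \<Rightarrow> nat \<Rightarrow> real" where
  "win_val n f t s j = (if winners n f t s j = {} then 0
      else s (SOME i. i \<in> winners n f t s j) j)"

definition SW :: "nat \<Rightarrow> nat \<Rightarrow> real \<Rightarrow> (real \<Rightarrow> real) \<Rightarrow> real \<Rightarrow> (nat \<Rightarrow> nat \<Rightarrow> real) \<Rightarrow> real" where
  "SW n m p f t s = - Max ((\<lambda>j. \<bar>p - win_val n f t s j\<bar>) ` {..<m})"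

end

theory Submission
  imports Defs
begin

lemma exists_small_win:
  fixes c :: nat
  assumes prof: "profile n m s'" and c1: "1 \<le> c" and lt: "n * (c - 1) < m"
  shows "\<exists>j<m. win_val n f t s' j \<le> 1 / real c"
proof (rule ccontr)
  assume "\<not> ?thesis"
  hence H: "\<And>j. j < m \<Longrightarrow> win_val n f t s' j > 1 / real c" by force
  have cpos: "1 / real c > 0" using c1 by simp
  have ne: "winners n f t s' j \<noteq> {}" if "j < m" for j
    using H[OF that] cpos unfolding win_val_def by (auto split: if_splits)
  define g where "g j = (SOME i. i \<in> winners n f t s' j)" for j
  have gw: "g j \<in> winners n f t s' j" if "j < m" for j
    using ne[OF that] unfolding g_def by (simp add: some_in_eq)
  have gn: "g j < n" if "j < m" for j using gw[OF that] unfolding winners_def by auto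
  have wv: "win_val n f t s' j = s' (g j) j" if "j < m" for j
    using ne[OF that] unfolding win_val_def g_def by simp
  define F where "F i = {j. j < m \<and> g j = i}" for i
  have Fc: "card (F i) \<le> c - 1" if "i < n" for i
  proof (rule ccontr)
    assume "\<not> card (F i) \<le> c - 1"
    hence cF: "card (F i) \<ge> c" by simp
    have fin: "finite (F i)" unfolding F_def by simp
    have Fne: "F i \<noteq> {}" using cF c1 by auto
    have "(\<Sum>j\<in>F i. 1 / real c) < (\<Sum>j\<in>F i. s' i j)"
      apply (rule sum_strict_mono[OF fin Fne])
      using H wv unfolding F_def by auto
    moreover have "(\<Sum>j\<in>F i. 1 / real c) \<ge> 1"
      using cF c1 by (simp add: field_simps)
    moreover have "(\<Sum>j\<in>F i. s' i j) \<le> (\<Sum>j<m. s' i j)"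
      apply (rule sum_mono2) using prof that unfolding F_def profile_def doc_space_def by auto
    moreover have "(\<Sum>j<m. s' i j) \<le> 1"
      using prof that unfolding profile_def doc_space_def by auto
    ultimately show False by linarith
  qed
  have "(\<Sum>i<n. card (F i)) = (\<Sum>i<n. \<Sum>j<m. (if g j = i then 1 else 0::nat))"
    unfolding F_def by (simp add: sum.If_cases Int_def conj_commute)
  also have "\<dots> = (\<Sum>j<m. \<Sum>i<n. (if g j = i then 1 else 0::nat))" by (rule sum.swap)
  also have "\<dots> = (\<Sum>j<m. 1::nat)"
    by (rule sum.cong) (auto simp: gn)
  also have "\<dots> = m" by simp
  finally have "m = (\<Sum>i<n. card (F i))" by simp
  also have "\<dots> \<le> (\<Sum>i<n. c - 1)" apply (rule sum_mono) using Fc by simp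
  also have "\<dots> = n * (c - 1)" by simp
  finally show False using lt by simp
qed

theorem lemma2:
  fixes n m :: nat and p t :: real and f :: "real \<Rightarrow> real"
    and s :: "nat \<Rightarrow> nat \<Rightarrow> real"
  assumes "0 < n" and "n < m"
    and "0 < p" and "p \<le> 1"
    and "single_peaked f p"
    and "pure_equilibrium n m f t s"
    and "( 1 / (of_int \<lceil>2 * real m / real n\<rceil> - 1) < p
           \<and> p \<le> 1 / of_int \<lceil>real m / real n\<rceil>
           \<and> t > p - (p * (of_int \<lfloor>1 / p\<rfloor> + 1) - 1)
                     / (of_int \<lceil>2 * real m / real n\<rceil> - of_int \<lfloor>1 / p\<rfloor>)
           \<and> (\<forall>j<m. win_val n f t s j = p) )
       \<or> ( p > 1 / of_int \<lceil>real m / real n\<rceil>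
           \<and> (\<exists>\<epsilon>>0. (m mod n = 0 \<longrightarrow> t \<ge> (1 - real n / real m) * (real n / real m) + \<epsilon>)
                    \<and> (m mod n \<noteq> 0 \<longrightarrow> t \<ge> 1 / of_int \<lceil>real m / real n\<rceil>))
           \<and> (\<forall>j<m. win_val n f t s j = 1 / of_int \<lceil>real m / real n\<rceil>) )"
  shows "(\<forall>s'. profile n m s' \<longrightarrow> SW n m p f t s' \<le> SW n m p f t s)
         \<and> (\<forall>j<m. winners n f t s j \<noteq> {})"
proof
  show "\<forall>j<m. winners n f t s j \<noteq> {}" using assms(6) unfolding pure_equilibrium_def by blast
next
  have mne: "{..<m} \<noteq> {}" using assms(2) by auto
  have img: "(\<lambda>j. v) ` {..<m} = {v}" for v :: real using mne by auto
  show "\<forall>s'. profile n m s' \<longrightarrow> SW n m p f t s' \<le> SW n m p f t s"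
  proof (intro allI impI)
    fix s' assume prof: "profile n m s'"
    let ?A = "(\<lambda>j. \<bar>p - win_val n f t s' j\<bar>) ` {..<m}"
    have fA: "finite ?A" by simp
    have neA: "?A \<noteq> {}" using mne by simp
    from assms(7) show "SW n m p f t s' \<le> SW n m p f t s"
    proof
      assume A: "1 / (of_int \<lceil>2 * real m / real n\<rceil> - 1) < p
           \<and> p \<le> 1 / of_int \<lceil>real m / real n\<rceil>
           \<and> t > p - (p * (of_int \<lfloor>1 / p\<rfloor> + 1) - 1)
                     / (of_int \<lceil>2 * real m / real n\<rceil> - of_int \<lfloor>1 / p\<rfloor>)
           \<and> (\<forall>j<m. win_val n f t s j = p)"
      have "SW n m p f t s = 0"
      proof -
        have "(\<lambda>j. \<bar>p - win_val n f t s j\<bar>) ` {..<m} = {0}"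
        proof -
          have W: "\<forall>j<m. win_val n f t s j = p" using A by blast
          have "(\<lambda>j. \<bar>p - win_val n f t s j\<bar>) ` {..<m} = (\<lambda>j. 0) ` {..<m}"
            by (rule image_cong) (use W in auto)
          thus ?thesis using img by simp
        qed
        thus ?thesis unfolding SW_def by simp
      qed
      moreover have "Max ?A \<ge> 0"
      proof -
        have "Max ?A \<ge> \<bar>p - win_val n f t s' 0\<bar>" by (intro Max_ge fA) (use assms(2) in auto)
        thus ?thesis by linarith
      qed
      ultimately show ?thesis unfolding SW_def by simp
    next
      assume B: "p > 1 / of_int \<lceil>real m / real n\<rceil>
           \<and> (\<exists>\<epsilon>>0. (m mod n = 0 \<longrightarrow> t \<ge> (1 - real n / real m) * (real n / real m) + \<epsilon>)
                    \<and> (m mod n \<noteq> 0 \<longrightarrow> t \<ge> 1 / of_int \<lceil>real m / real n\<rceil>))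
           \<and> (\<forall>j<m. win_val n f t s j = 1 / of_int \<lceil>real m / real n\<rceil>)"
      define c where "c = nat \<lceil>real m / real n\<rceil>"
      have cge: "real m / real n \<le> of_int \<lceil>real m / real n\<rceil>" by (rule le_of_int_ceiling)
      have mn: "real m / real n > 1" using assms(1,2) by simp
      have cint: "of_int \<lceil>real m / real n\<rceil> = real c" unfolding c_def using cge mn by simp
      have c1: "1 \<le> c" using cge mn cint by linarith
      have "real c < real m / real n + 1" using cint ceiling_correct[of "real m / real n"] by linarith
      hence "real c - 1 < real m / real n" by simp
      hence "real n * (real c - 1) < real m" using assms(1) by (simp add: field_simps)
      moreover have "real (n * (c - 1)) = real n * (real c - 1)" using c1 by (simp add: of_nat_diff)
      ultimately have lt: "n * (c - 1) < m" by (metis of_nat_less_iff)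
      have pc: "p > 1 / real c" using B cint by simp
      have "SW n m p f t s = - (p - 1 / real c)"
      proof -
        have "(\<lambda>j. \<bar>p - win_val n f t s j\<bar>) ` {..<m} = {p - 1 / real c}"
        proof -
          have W: "\<forall>j<m. win_val n f t s j = 1 / real c" using B cint by simp
          have "(\<lambda>j. \<bar>p - win_val n f t s j\<bar>) ` {..<m} = (\<lambda>j. p - 1 / real c) ` {..<m}"
            by (rule image_cong) (use W pc in auto)
          thus ?thesis using img by simp
        qed
        thus ?thesis unfolding SW_def by simp
      qed
      moreover obtain j where j: "j < m" "win_val n f t s' j \<le> 1 / real c"
        using exists_small_win[OF prof c1 lt] by blast
      moreover have "Max ?A \<ge> \<bar>p - win_val n f t s' j\<bar>"
        using j by (intro Max_ge fA) auto
      ultimately show ?thesis unfolding SW_def by linarith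
    qed
  qed
qed

end
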